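(* Let $W_{24,23}$ be the $24\times 24$ matrix \[ W_{24,23}=\begin{pmatrix} 0 & 1 & \cdots & 1\\ -1 & & & \\ \vdots & & A & \\ -1 & & & \end{pmatrix}, \] where $A$ is the $23\times 23$ circulant matrix with first row $(0,1,1,1,1,-1,1,-1,1,1,-1,-1,1,1,-1,-1,1,-1,1,-1,-1,-1,-1)$. Let $C_3(W_{24,23})$ be the ternary code of length $48$ with generator matrix $(I\ \ W_{24,23})$, entries read modulo $3$. Then the lattice $A_3(C_3(W_{24,23}))$ contains a $k$-frame for every positive integer $k\ge 3$ that is not of the form $2^{m_1}5^{m_2}7^{m_3}23^{m_4}$ with $m_1,m_2,m_3,m_4$ non-negative integers.
   Context: An $N\times N$ circulant matrix with first row $(r_0,\dots,r_{N-1})$ is the matrix whose $(i,j)$ entry ($0\le i,j\le N-1$) is $r_{(j-i)\bmod N}$. Construction A: with $\rho:\mathbb{Z}_k\to\mathbb{Z}$ sending $0,1,\dots,k-1$ to $0,1,\dots,k-1$, for a $\mathbb{Z}_k$-code $C$ of length $N$ set $A_k(C)=\frac{1}{\sqrt{k}}\{\rho(C)+k\mathbb{Z}^N\}$. A $t$-frame of a lattice in dimension $N$ is a set of $N$ lattice vectors $f_1,\dots,f_N$ with $(f_i,f_j)=t\,\delta_{i,j}$. *)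

theory Defs
  imports Complex_Main
begin

text \<open>Matrices are represented as functions nat => nat => int, indices starting at 0.
  Elements of Z_k are represented by their canonical integer representatives 0..k-1,
  so the map rho of the paper is the inclusion of these representatives into Z.
  Vectors of length N are functions nat => _ that vanish outside {..<N}.\<close>

definition circulant :: "nat \<Rightarrow> (nat \<Rightarrow> int) \<Rightarrow> nat \<Rightarrow> nat \<Rightarrow> int" where
  "circulant N r i j = r ((j + N - i) mod N)"

definition A_row :: "int list" where
  "A_row = [0,1,1,1,1,-1,1,-1,1,1,-1,-1,1,1,-1,-1,1,-1,1,-1,-1,-1,-1]"

definition A23 :: "nat \<Rightarrow> nat \<Rightarrow> int" where
  "A23 = circulant 23 (\<lambda>l. A_row ! l)"

definition W24 :: "nat \<Rightarrow> nat \<Rightarrow> int" where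
  "W24 i j = (if i = 0 then (if j = 0 then 0 else 1)
              else if j = 0 then -1 else A23 (i - 1) (j - 1))"

definition genIW :: "nat \<Rightarrow> nat \<Rightarrow> int" where
  "genIW i j = (if j < 24 then (if i = j then 1 else 0) else W24 i (j - 24))"

definition gen_code :: "int \<Rightarrow> nat \<Rightarrow> nat \<Rightarrow> (nat \<Rightarrow> nat \<Rightarrow> int) \<Rightarrow> (nat \<Rightarrow> int) set" where
  "gen_code k N r G = {c. \<exists>a :: nat \<Rightarrow> int.
      (\<forall>j<N. c j = (\<Sum>i<r. a i * G i j) mod k) \<and> (\<forall>j\<ge>N. c j = 0)}"

definition constrA :: "int \<Rightarrow> nat \<Rightarrow> (nat \<Rightarrow> int) set \<Rightarrow> (nat \<Rightarrow> real) set" where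
  "constrA k N C = {v. \<exists>c\<in>C. \<exists>z :: nat \<Rightarrow> int. \<forall>j.
      v j = (if j < N then (of_int (c j) + of_int k * of_int (z j)) / sqrt (of_int k) else 0)}"

definition inner_N :: "nat \<Rightarrow> (nat \<Rightarrow> real) \<Rightarrow> (nat \<Rightarrow> real) \<Rightarrow> real" where
  "inner_N N x y = (\<Sum>l<N. x l * y l)"

definition has_frame :: "(nat \<Rightarrow> real) set \<Rightarrow> nat \<Rightarrow> real \<Rightarrow> bool" where
  "has_frame L N t = (\<exists>f :: nat \<Rightarrow> nat \<Rightarrow> real.
      (\<forall>i<N. f i \<in> L) \<and>
      (\<forall>i<N. \<forall>j<N. inner_N N (f i) (f j) = (if i = j then t else 0)))"

end

theory Submission
  imports Defs "HOL-Computational_Algebra.Primes"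
begin

definition sq4 :: "int \<Rightarrow> bool" where
  "sq4 n \<longleftrightarrow> (\<exists>a b c d. n = a^2+b^2+c^2+d^2)"

lemma sq4I: "n = a^2+b^2+c^2+d^2 \<Longrightarrow> sq4 n"
  unfolding sq4_def by (intro exI)

lemma euler4:
  fixes a b c d w x y z :: int
  shows "(a^2+b^2+c^2+d^2)*(w^2+x^2+y^2+z^2) =
    (a*w+b*x+c*y+d*z)^2+(a*x-b*w+c*z-d*y)^2+(a*y-b*z-c*w+d*x)^2+(a*z+b*y-c*x-d*w)^2"
  by algebra

lemma sq4_mult: "sq4 m \<Longrightarrow> sq4 n \<Longrightarrow> sq4 (m*n)"
  unfolding sq4_def using euler4 by metis

lemma sq_inj_mod:
  fixes p x y :: nat
  assumes p: "prime p" and x: "2*x < p" and y: "2*y < p" and e: "x^2 mod p = y^2 mod p"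
  shows "x = y"
proof -
  have "int x ^2 mod int p = int y^2 mod int p" using e
    by (metis of_nat_mod of_nat_power)
  then have "int p dvd int x^2 - int y^2"
    using mod_eq_dvd_iff by blast
  then have d: "int p dvd (int x - int y) * (int x + int y)"
    by (simp add: power2_eq_square algebra_simps)
  have pp: "prime (int p)" using p by simp
  have o: "int p dvd (int x - int y) \<or> int p dvd (int x + int y)"
    using prime_dvd_mult_iff[OF pp] d by blast
  show ?thesis
  proof (rule ccontr)
    assume ne: "x \<noteq> y"
    show False using o
    proof
      assume h: "int p dvd int x - int y"
      have "int x - int y \<noteq> 0" using ne by simp
      from dvd_imp_le_int[OF this h] have "\<bar>int p\<bar> \<le> \<bar>int x - int y\<bar>" .
      then show False using x y by linarith
    next
      assume h: "int p dvd int x + int y"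
      have "int x + int y \<noteq> 0" using ne by simp
      from dvd_imp_le_int[OF this h] have "\<bar>int p\<bar> \<le> \<bar>int x + int y\<bar>" .
      then show False using x y by linarith
    qed
  qed
qed

lemma pigeon:
  fixes p :: nat
  assumes p: "prime p" and odd: "odd p"
  shows "\<exists>x y. 2*x < p \<and> 2*y < p \<and> p dvd x^2+y^2+1"
proof -
  define h where "h = p div 2"
  have p2: "p \<ge> 2" using p prime_ge_2_nat by blast
  have ph: "2*h + 1 = p" unfolding h_def using odd by (rule odd_two_times_div_two_succ)
  have hl: "\<And>x. x \<le> h \<Longrightarrow> 2*x < p" using ph by linarith
  define A where "A = (\<lambda>x. x^2 mod p) ` {..h}"
  define B where "B = (\<lambda>y. p - 1 - y^2 mod p) ` {..h}"
  have injA: "inj_on (\<lambda>x. x^2 mod p) {..h}"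
  proof (rule inj_onI)
    fix x y assume a: "x \<in> {..h}" "y \<in> {..h}" "x^2 mod p = y^2 mod p"
    have "x \<le> h" "y \<le> h" using a by auto
    then show "x = y" using sq_inj_mod[OF p hl hl a(3)] by blast
  qed
  have injB: "inj_on (\<lambda>y. p - 1 - y^2 mod p) {..h}"
  proof (rule inj_onI)
    fix x y assume "x \<in> {..h}" "y \<in> {..h}" "p - 1 - x^2 mod p = p - 1 - y^2 mod p"
    moreover have "x^2 mod p < p" "y^2 mod p < p" using p2 by auto
    ultimately have "x^2 mod p = y^2 mod p" by linarith
    moreover have "x \<le> h" "y \<le> h" using \<open>x \<in> {..h}\<close> \<open>y \<in> {..h}\<close> by auto
    ultimately show "x = y" using sq_inj_mod[OF p hl hl] by blast
  qed
  have cA: "card A = h + 1" unfolding A_def using card_image[OF injA] by simp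
  have cB: "card B = h + 1" unfolding B_def using card_image[OF injB] by simp
  have sub: "A \<union> B \<subseteq> {..<p}" unfolding A_def B_def using p2 by auto
  have "A \<inter> B \<noteq> {}"
  proof
    assume "A \<inter> B = {}"
    then have "card (A \<union> B) = card A + card B"
      by (simp add: card_Un_disjoint A_def B_def)
    also have "\<dots> = p + 1" using cA cB ph by linarith
    finally have "card (A \<union> B) = p + 1" .
    moreover have "card (A \<union> B) \<le> p" using card_mono[OF _ sub] by simp
    ultimately show False by simp
  qed
  then obtain x y where xy: "x \<le> h" "y \<le> h" "x^2 mod p = p - 1 - y^2 mod p"
    unfolding A_def B_def by auto
  have "y^2 mod p < p" using p2 by auto
  then have sm: "x^2 mod p + y^2 mod p + 1 = p" using xy(3) by linarith
  have e1: "p * (x^2 div p) + x^2 mod p = x^2" by (rule mult_div_mod_eq)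
  have e2: "p * (y^2 div p) + y^2 mod p = y^2" by (rule mult_div_mod_eq)
  have "x^2 + y^2 + 1 = p * (x^2 div p + y^2 div p + 1)"
    unfolding distrib_left mult_1_right using e1 e2 sm by linarith
  then have dv: "p dvd x^2+y^2+1" by (metis dvd_triv_left)
  show ?thesis by (intro exI conjI, rule hl[OF xy(1)], rule hl[OF xy(2)], rule dv)
qed

lemma descent:
  fixes p :: nat
  assumes p: "prime p"
  shows "0 < m \<Longrightarrow> m < p \<Longrightarrow> sq4 (int m * int p) \<Longrightarrow> sq4 (int p)"
proof (induction m rule: less_induct)
  case (less m)
  show ?case
  proof (cases "m = 1")
    case True then show ?thesis using less by simp
  next
    case False
    with less have m1: "m > 1" by simp
    obtain a b c d where abcd: "int m * int p = a^2+b^2+c^2+d^2"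
      using less(4) unfolding sq4_def by blast
    define M where "M = int m"
    define h where "h = M div 2"
    have M1: "M > 1" using m1 unfolding M_def by simp
    have hM: "M = 2*h \<or> M = 2*h+1" unfolding h_def by presburger
    have h0: "h \<ge> 0" using M1 unfolding h_def by simp
    define cr where "cr = (\<lambda>x. x - M * ((x + h) div M))"
    have crb: "- h \<le> cr x \<and> cr x \<le> M - 1 - h" for x
    proof -
      have e1: "(x+h) - M*((x+h) div M) = (x+h) mod M" by (rule minus_mult_div_eq_mod)
      have "cr x = (x + h) mod M - h" unfolding cr_def using e1 by linarith
      moreover have "0 \<le> (x + h) mod M" "(x + h) mod M < M" using M1 by auto
      ultimately show ?thesis by linarith
    qed
    have crabs: "\<bar>cr x\<bar> \<le> h" for x using crb[of x] hM by linarith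
    have crsq: "4 * (cr x)^2 \<le> M^2" for x
    proof -
      have "\<bar>2*cr x\<bar> \<le> \<bar>M\<bar>" using crabs[of x] hM M1 by linarith
      then have "(2*cr x)^2 \<le> M^2" by (simp add: abs_le_square_iff)
      then show ?thesis by (simp add: power_mult_distrib)
    qed
    have creq: "M = 2*h \<and> cr x = - h" if e: "4 * (cr x)^2 = M^2" for x
    proof -
      have "(2 * cr x)^2 = M^2" using e by (simp add: power_mult_distrib)
      then have "2 * cr x = M \<or> 2 * cr x = - M" by (rule power2_eq_iff[THEN iffD1])
      then show ?thesis using crb[of x] hM M1 by linarith
    qed
    define a' where "a' = cr a"
    define b' where "b' = cr b"
    define c' where "c' = cr c"
    define d' where "d' = cr d"
    define ka where "ka = (a + h) div M"
    define kb where "kb = (b + h) div M"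
    define kc where "kc = (c + h) div M"
    define kd where "kd = (d + h) div M"
    have ra: "a' = a - M*ka" "b' = b - M*kb" "c' = c - M*kc" "d' = d - M*kd"
      unfolding a'_def b'_def c'_def d'_def ka_def kb_def kc_def kd_def cr_def by simp_all
    have S: "M * int p = a^2+b^2+c^2+d^2" using abcd unfolding M_def .
    have "a'^2+b'^2+c'^2+d'^2 = (a^2+b^2+c^2+d^2) - M * (2*a*ka - M*ka^2 + 2*b*kb - M*kb^2 + 2*c*kc - M*kc^2 + 2*d*kd - M*kd^2)"
      unfolding ra by algebra
    also have "\<dots> = M * (int p - (2*a*ka - M*ka^2 + 2*b*kb - M*kb^2 + 2*c*kc - M*kc^2 + 2*d*kd - M*kd^2))"
      unfolding S[symmetric] by (simp add: right_diff_distrib)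
    finally obtain r where r: "a'^2+b'^2+c'^2+d'^2 = M * r" by blast
    have r0: "r \<ge> 0"
    proof -
      have "M * r \<ge> 0" using r[symmetric] by simp
      then show ?thesis using M1 by (simp add: zero_le_mult_iff)
    qed
    have "4 * (M * r) \<le> 4 * M^2"
      using crsq[of a] crsq[of b] crsq[of c] crsq[of d] unfolding r[symmetric] a'_def b'_def c'_def d'_def
      unfolding distrib_left by linarith
    then have "M * r \<le> M * M" by (simp add: power2_eq_square)
    then have rM: "r \<le> M" using M1 by simp
    have notdvd: "\<not> M dvd int p"
    proof
      assume "M dvd int p"
      then have "m dvd p" unfolding M_def by simp
      then show False using p m1 less(3) prime_nat_iff by auto
    qed
    have "r \<noteq> 0"
    proof
      assume "r = 0"
      then have "a'^2+b'^2+c'^2+d'^2 = 0" using r by simp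
      then have "a'^2 = 0" "b'^2 = 0" "c'^2 = 0" "d'^2 = 0"
        using zero_le_power2[of a'] zero_le_power2[of b'] zero_le_power2[of c'] zero_le_power2[of d']
        by linarith+
      then have z: "a' = 0" "b' = 0" "c' = 0" "d' = 0" by simp_all
      have za: "a = M*ka" "b = M*kb" "c = M*kc" "d = M*kd" using ra z by simp_all
      have "M * int p = M * (M * (ka^2+kb^2+kc^2+kd^2))"
        unfolding S za by algebra
      then have "int p = M * (ka^2+kb^2+kc^2+kd^2)" using M1 by simp
      then show False using notdvd by simp
    qed
    moreover have "r \<noteq> M"
    proof
      assume "r = M"
      have "4*a'^2 = M^2 \<and> 4*b'^2 = M^2 \<and> 4*c'^2 = M^2 \<and> 4*d'^2 = M^2"
      proof -
        have "4*(a'^2+b'^2+c'^2+d'^2) = 4 * M^2" using r \<open>r = M\<close> by (simp add: power2_eq_square)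
        then show ?thesis using crsq[of a] crsq[of b] crsq[of c] crsq[of d]
          unfolding a'_def b'_def c'_def d'_def distrib_left by linarith
      qed
      then have z: "M = 2*h" "a' = -h" "b' = -h" "c' = -h" "d' = -h"
        using creq unfolding a'_def b'_def c'_def d'_def by blast+
      have za: "a = M*ka - h" "b = M*kb - h" "c = M*kc - h" "d = M*kd - h" using ra z by simp_all
      have "M * int p = (M*ka - h)^2 + (M*kb - h)^2 + (M*kc - h)^2 + (M*kd - h)^2"
        using S unfolding za .
      also have "\<dots> = (2*h) * ((2*h) * (1 + (ka^2-ka+kb^2-kb+kc^2-kc+kd^2-kd)))"
        unfolding z(1) by algebra
      finally have "M * int p = M * (M * (1 + (ka^2-ka+kb^2-kb+kc^2-kc+kd^2-kd)))"
        unfolding z(1) .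
      then have "int p = M * (1 + (ka^2-ka+kb^2-kb+kc^2-kc+kd^2-kd))" using M1 by simp
      then show False using notdvd by simp
    qed
    ultimately have r1: "0 < r" "r < M" using r0 rM by auto
    define A where "A = a*a'+b*b'+c*c'+d*d'"
    define B where "B = a*b'-b*a'+c*d'-d*c'"
    define C where "C = a*c'-b*d'-c*a'+d*b'"
    define D where "D = a*d'+b*c'-c*b'-d*a'"
    have E: "(a^2+b^2+c^2+d^2)*(a'^2+b'^2+c'^2+d'^2) = A^2+B^2+C^2+D^2"
      unfolding A_def B_def C_def D_def by (rule euler4)
    define X1 where "X1 = int p - (a*ka+b*kb+c*kc+d*kd)"
    define X2 where "X2 = - a*kb + b*ka - c*kd + d*kc"
    define X3 where "X3 = - a*kc + b*kd + c*ka - d*kb"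
    define X4 where "X4 = - a*kd - b*kc + c*kb + d*ka"
    have dA: "A = M * X1"
    proof -
      have "A = (a^2+b^2+c^2+d^2) - M*(a*ka+b*kb+c*kc+d*kd)"
        unfolding A_def ra by algebra
      then show ?thesis unfolding X1_def S[symmetric] by (simp add: right_diff_distrib)
    qed
    have dB: "B = M * X2" unfolding B_def ra X2_def by algebra
    have dC: "C = M * X3" unfolding C_def ra X3_def by algebra
    have dD: "D = M * X4" unfolding D_def ra X4_def by algebra
    have "(M * int p) * (M * r) = (M*X1)^2+(M*X2)^2+(M*X3)^2+(M*X4)^2"
      using E unfolding S[symmetric] r dA dB dC dD .
    also have "\<dots> = (M * M) * (X1^2+X2^2+X3^2+X4^2)" by algebra
    finally have "(M * M) * (r * int p) = (M * M) * (X1^2+X2^2+X3^2+X4^2)"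
      by (simp add: mult_ac)
    then have "r * int p = X1^2+X2^2+X3^2+X4^2"
      using M1 by simp
    then have sq: "sq4 (int (nat r) * int p)" using r1 unfolding sq4_def by auto
    show ?thesis
      using less(1)[of "nat r"] r1 sq less(3) unfolding M_def by auto
  qed
qed

lemma sq4_prime:
  fixes p :: nat assumes p: "prime p" shows "sq4 (int p)"
proof (cases "p = 2")
  case True
  then have "int p = 1^2+1^2+0^2+0^2" by simp
  then show ?thesis by (rule sq4I)
next
  case False
  then have "p > 2" using prime_ge_2_nat[OF p] by linarith
  then have odd: "odd p" by (rule prime_odd_nat[OF p])
  obtain x y where xy: "2*x < p" "2*y < p" "p dvd x^2+y^2+1" using pigeon[OF p odd] by blast
  then obtain m where m: "x^2+y^2+1 = p * m" by blast
  have p2: "p \<ge> 2" using p prime_ge_2_nat by blast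
  have "(2*x)^2 < p^2" using xy(1) by (intro power_strict_mono) auto
  then have "4*x^2 < p^2" by (simp add: power_mult_distrib)
  have "(2*y)^2 < p^2" using xy(2) by (intro power_strict_mono) auto
  then have "4*y^2 < p^2" by (simp add: power_mult_distrib)
  moreover have "4 \<le> p^2" using power_mono[OF p2, of 2] by simp
  moreover have "4*(x^2+y^2+1) = 4*x^2+4*y^2+4" by simp
  ultimately have "4*(x^2+y^2+1) < 4 * p^2" using \<open>4*x^2 < p^2\<close> by linarith
  then have "x^2+y^2+1 < p^2" by simp
  then have "p * m < p * p" using m by (simp add: power2_eq_square)
  then have "0 < p \<and> m < p" by simp
  then have "m < p" by simp
  moreover have "m > 0" using m by (cases m) auto
  moreover have "sq4 (int m * int p)"
  proof -
    have "int m * int p = (int x)^2 + (int y)^2 + 1^2 + 0^2"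
      using arg_cong[OF m, of int] by (simp add: mult.commute)
    then show ?thesis by (rule sq4I)
  qed
  ultimately show ?thesis using descent[OF p] by blast
qed

lemma four_squares: "sq4 (int n)"
proof (induction n rule: less_induct)
  case (less n)
  show ?case
  proof (cases "n \<le> 1")
    case True
    then have "n = 0 \<or> n = 1" by auto
    then have "int n = (int n)^2 + 0^2 + 0^2 + 0^2" by auto
    then show ?thesis by (rule sq4I)
  next
    case False
    then obtain p where p: "prime p" "p dvd n" using prime_factor_nat[of n] by auto
    then obtain q where q: "n = p * q" by blast
    have "q \<noteq> 0" using False q by (cases q) auto
    then have "q < n" using q prime_gt_1_nat[OF p(1)] by simp
    then have "sq4 (int q)" using less by blast
    then show ?thesis using sq4_mult[OF sq4_prime[OF p(1)]] q by simp
  qed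
qed
definition sigl :: "nat \<Rightarrow> nat list" where
  "sigl p = (if p = 2 then [1,0,15,8,21,16,13,11,3,20,23,7,19,6,18,2,5,22,14,12,9,4,17,10]
    else if p = 3 then [12,19,22,18,13,23,21,9,14,7,16,20,0,4,8,17,10,15,3,1,11,6,2,5]
    else [19,12,17,14,6,10,4,20,18,11,5,9,1,21,3,22,23,2,8,0,7,13,15,16])"
definition sgl :: "nat \<Rightarrow> int list" where
  "sgl p = (if p = 2 then [-1,1,1,1,1,1,-1,1,-1,1,1,-1,-1,1,1,-1,-1,1,-1,1,-1,-1,-1,-1]
    else if p = 3 then [-1,1,1,-1,-1,1,-1,1,-1,-1,-1,-1,1,1,1,1,1,-1,1,-1,1,1,-1,-1]
    else [1,1,-1,1,-1,-1,1,1,-1,-1,1,1,-1,1,-1,1,1,1,1,-1,-1,-1,-1,-1])"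
definition sig :: "nat \<Rightarrow> nat \<Rightarrow> nat" where "sig p x = sigl p ! x"
definition sg :: "nat \<Rightarrow> nat \<Rightarrow> int" where "sg p x = sgl p ! x"

definition PQQ :: "nat \<Rightarrow> nat \<Rightarrow> nat \<Rightarrow> nat \<Rightarrow> int" where
  "PQQ p q x y = sg p (sig p x) * (if y = sig q (sig p x) then sg q (sig p x) else 0)"

definition a2 :: "nat \<Rightarrow> nat \<Rightarrow> nat \<Rightarrow> int" where
  "a2 p i j = (if p = 0 then (if i = j then 1 else 0)
    else if p = 1 then (if i = 0 \<and> j = 1 then 1 else if i = 1 \<and> j = 0 then -1 else 0)
    else if p \<le> 4 then (if i = j then (if i = 0 then 1 else -1) else 0)
    else (if i \<noteq> j then 1 else 0))"
definition A2 :: "nat \<Rightarrow> nat \<Rightarrow> nat \<Rightarrow> nat \<Rightarrow> int" where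
  "A2 p q i j = a2 p i 0 * a2 q j 0 + a2 p i 1 * a2 q j 1"
definition eps :: "nat \<Rightarrow> nat \<Rightarrow> int" where
  "eps p q = (if (p \<le> 1 \<and> q \<le> 1) \<or> (2 \<le> p \<and> p \<le> 4 \<and> q = 5) \<or> (2 \<le> q \<and> q \<le> 4 \<and> p = 5) then 1 else -1)"

definition chkW where "chkW = list_all (\<lambda>x. list_all (\<lambda>y. W24 y x = - W24 x y \<and>
   (\<Sum>l\<leftarrow>[0..<24]. W24 x l * W24 y l) = (if x = y then 23 else 0)) [0..<24]) [0..<24]"
definition chkQ where "chkQ = list_all (\<lambda>p. list_all (\<lambda>x. sig p x < 24 \<and> sig p (sig p x) = x \<and>
   sg p x * sg p (sig p x) = -1 \<and> sg p x * sg p x = 1) [0..<24]) [2,3,4]"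
definition chkQW where "chkQW = list_all (\<lambda>p. list_all (\<lambda>x. list_all (\<lambda>y.
   sg p (sig p x) * W24 y (sig p x) = sg p (sig p y) * W24 x (sig p y)) [0..<24]) [0..<24]) [2,3,4]"
definition chkQQ where "chkQQ = list_all (\<lambda>(p,q). list_all (\<lambda>x. list_all (\<lambda>y.
   PQQ p q y x = - PQQ p q x y) [0..<24]) [0..<24]) [(2,3),(2,4),(3,4)]"
definition chkA where "chkA = list_all (\<lambda>p. list_all (\<lambda>q. list_all (\<lambda>i. list_all (\<lambda>j.
   (if p = q then A2 p q i j = (if i = j then 1 else 0) else A2 p q j i = - eps p q * A2 p q i j)) [0..<2]) [0..<2]) [0..<6]) [0..<6]"

lemma chkW: chkW unfolding chkW_def W24_def A23_def circulant_def A_row_def by code_simp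
lemma chkQ: chkQ unfolding chkQ_def sig_def sg_def sigl_def sgl_def by code_simp
lemma chkQW: chkQW unfolding chkQW_def sig_def sg_def sigl_def sgl_def W24_def A23_def circulant_def A_row_def by code_simp
lemma chkQQ: chkQQ unfolding chkQQ_def PQQ_def sig_def sg_def sigl_def sgl_def by code_simp
lemma chkA: chkA unfolding chkA_def A2_def a2_def eps_def by code_simp

definition T24 :: "nat \<Rightarrow> nat \<Rightarrow> nat \<Rightarrow> int" where
  "T24 p x y = (if p \<le> 1 then (if x = y then 1 else 0)
     else if p \<le> 4 then (if x = sig p y then sg p y else 0) else W24 x y)"
definition P24 :: "nat \<Rightarrow> nat \<Rightarrow> nat \<Rightarrow> nat \<Rightarrow> int" where
  "P24 p q x y = (\<Sum>l<24. T24 p x l * T24 q y l)"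
definition B :: "nat \<Rightarrow> nat \<Rightarrow> nat \<Rightarrow> int" where
  "B p i j = a2 p (i div 24) (j div 24) * T24 p (i mod 24) (j mod 24)"
definition G :: "nat \<Rightarrow> nat \<Rightarrow> nat \<Rightarrow> nat \<Rightarrow> int" where
  "G p q i j = (\<Sum>l<48. B p i l * B q j l)"

lemma sl: "(\<Sum>l\<leftarrow>[0..<n]. f l) = (\<Sum>l<n. f l)"
  by (induct n) auto

lemma la: "list_all P xs \<Longrightarrow> x \<in> set xs \<Longrightarrow> P x" by (simp add: list_all_iff)
lemma u24: "x < (24::nat) \<Longrightarrow> x \<in> set [0..<24]" by simp
lemma u2: "x < (2::nat) \<Longrightarrow> x \<in> set [0..<2]" by simp
lemma u6: "x < (6::nat) \<Longrightarrow> x \<in> set [0..<6]" by simp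

lemma Wboth: "x < 24 \<Longrightarrow> y < 24 \<Longrightarrow> W24 y x = - W24 x y \<and>
   (\<Sum>l\<leftarrow>[0..<24]. W24 x l * W24 y l) = (if x = y then 23 else 0)"
  by (rule la[OF la[OF chkW[unfolded chkW_def] u24] u24])
lemma Wsk: "x < 24 \<Longrightarrow> y < 24 \<Longrightarrow> W24 y x = - W24 x y"
  using Wboth by blast
lemma WW: "x < 24 \<Longrightarrow> y < 24 \<Longrightarrow> (\<Sum>l<24. W24 x l * W24 y l) = (if x = y then 23 else 0)"
  using Wboth unfolding sl by blast
lemma Qf: "p \<in> {2,3,4} \<Longrightarrow> x < 24 \<Longrightarrow> sig p x < 24 \<and> sig p (sig p x) = x \<and>
   sg p x * sg p (sig p x) = -1 \<and> sg p x * sg p x = 1"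
proof -
  assume p: "p \<in> {2,3,4}" and x: "x < 24"
  have "p \<in> set [2,3,4]" using p by simp
  show ?thesis by (rule la[OF la[OF chkQ[unfolded chkQ_def] \<open>p \<in> set [2,3,4]\<close>] u24[OF x]])
qed
lemma QW: "p \<in> {2,3,4} \<Longrightarrow> x < 24 \<Longrightarrow> y < 24 \<Longrightarrow>
   sg p (sig p x) * W24 y (sig p x) = sg p (sig p y) * W24 x (sig p y)"
proof -
  assume p: "p \<in> {2,3,4}" and x: "x < 24" and y: "y < 24"
  have "p \<in> set [2,3,4]" using p by simp
  show ?thesis by (rule la[OF la[OF la[OF chkQW[unfolded chkQW_def] \<open>p \<in> set [2,3,4]\<close>] u24[OF x]] u24[OF y]])
qed
lemma QQ: "(p,q) \<in> {(2,3),(2,4),(3,4)} \<Longrightarrow> x < 24 \<Longrightarrow> y < 24 \<Longrightarrow> PQQ p q y x = - PQQ p q x y"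
proof -
  assume p: "(p,q) \<in> {(2,3),(2,4),(3,4)}" and x: "x < 24" and y: "y < 24"
  have "(p,q) \<in> set [(2,3),(2,4),(3,4)]" using p by simp
  from la[OF chkQQ[unfolded chkQQ_def] this]
  have "list_all (\<lambda>x. list_all (\<lambda>y. PQQ p q y x = - PQQ p q x y) [0..<24]) [0..<24]" by simp
  from la[OF la[OF this u24[OF x]] u24[OF y]] show ?thesis .
qed
lemma AA: "p < 6 \<Longrightarrow> q < 6 \<Longrightarrow> i < 2 \<Longrightarrow> j < 2 \<Longrightarrow>
   (if p = q then A2 p q i j = (if i = j then 1 else 0) else A2 p q j i = - eps p q * A2 p q i j)"
  by (rule la[OF la[OF la[OF la[OF chkA[unfolded chkA_def] u6] u6] u2] u2])

lemma msum:
  assumes p: "p \<in> {2,3,4}" and x: "x < 24"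
  shows "(\<Sum>l<24. T24 p x l * g l) = sg p (sig p x) * g (sig p x)"
proof -
  have p4: "\<not> p \<le> 1" "p \<le> 4" using p by auto
  have qx: "sig p x < 24" "sig p (sig p x) = x" using Qf[OF p x] by auto
  have "(\<Sum>l<24. T24 p x l * g l) = (\<Sum>l<24. if l = sig p x then sg p l * g l else 0)"
  proof (rule sum.cong)
    fix l assume "l \<in> {..<24::nat}"
    then have l: "l < 24" by simp
    have ql: "sig p (sig p l) = l" using Qf[OF p l] by auto
    have "x = sig p l \<longleftrightarrow> l = sig p x" using ql qx by metis
    then show "T24 p x l * g l = (if l = sig p x then sg p l * g l else 0)"
      unfolding T24_def using p4 by auto
  qed simp
  also have "\<dots> = sg p (sig p x) * g (sig p x)" using qx by (simp add: sum.delta)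
  finally show ?thesis .
qed

lemma isum: "(x::nat) < 24 \<Longrightarrow> (\<Sum>l<24. (if x = l then 1 else 0) * (g l::int)) = g x"
proof -
  assume x: "x < 24"
  have "(\<Sum>l<24. (if x = l then 1 else 0) * (g l::int)) = (\<Sum>l<24. if l = x then g l else 0)"
    by (intro sum.cong) auto
  also have "\<dots> = g x" using x by (simp add: sum.delta)
  finally show ?thesis .
qed

lemma P_left: "p \<le> 1 \<Longrightarrow> x < 24 \<Longrightarrow> P24 p q x y = T24 q y x"
proof -
  assume p: "p \<le> 1" and x: "x < 24"
  have "P24 p q x y = (\<Sum>l<24. (if x = l then 1 else 0) * T24 q y l)"
    unfolding P24_def T24_def[of p] using p by (intro sum.cong) auto
  then show ?thesis using isum[OF x] by simp
qed

lemma P_right: "q \<le> 1 \<Longrightarrow> y < 24 \<Longrightarrow> P24 p q x y = T24 p x y"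
proof -
  assume q: "q \<le> 1" and y: "y < 24"
  have "P24 p q x y = (\<Sum>l<24. (if y = l then 1 else 0) * T24 p x l)"
    unfolding P24_def T24_def[of q] using q by (intro sum.cong) auto
  then show ?thesis using isum[OF y] by simp
qed

lemma P_Q: "p \<in> {2,3,4} \<Longrightarrow> x < 24 \<Longrightarrow> P24 p q x y = sg p (sig p x) * T24 q y (sig p x)"
  unfolding P24_def by (rule msum)

lemma Qskew:
  assumes q: "q \<in> {2,3,4}" and x: "x < 24" and y: "y < 24"
  shows "T24 q x y = - T24 q y x"
proof -
  have q4: "\<not> q \<le> 1" "q \<le> 4" using q by auto
  note fx = Qf[OF q x] and fy = Qf[OF q y]
  show ?thesis
  proof (cases "x = sig q y")
    case True
    then have yx: "y = sig q x" using fy by simp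
    have e1: "sg q y * sg q x = -1" using fy True by (simp add: mult.commute)
    have e2: "sg q x * sg q x = 1" using fx by simp
    have "sg q y = sg q y * (sg q x * sg q x)" using e2 by simp
    also have "\<dots> = (sg q y * sg q x) * sg q x" by (simp add: mult.assoc)
    also have "\<dots> = - sg q x" using e1 by simp
    finally have "sg q y = - sg q x" .
    have t1: "T24 q x y = sg q y" unfolding T24_def using q4 True by simp
    have t2: "T24 q y x = sg q x" unfolding T24_def using q4 yx by simp
    show ?thesis unfolding t1 t2 by fact
  next
    case False
    then have "y \<noteq> sig q x" using fx by auto
    then show ?thesis unfolding T24_def using q4 False by simp
  qed
qed

lemma c6: "p < (6::nat) \<Longrightarrow> p \<le> 1 \<or> p \<in> {2,3,4} \<or> p = 5" by auto
lemma c66: "p < q \<Longrightarrow> q < (6::nat) \<Longrightarrow> (p \<le> 1 \<and> q \<le> 1) \<or> (p \<le> 1 \<and> q \<in> {2,3,4}) \<or> (p \<le> 1 \<and> q = 5)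
   \<or> (p \<in> {2,3,4} \<and> q \<in> {2,3,4}) \<or> (p \<in> {2,3,4} \<and> q = 5)" by auto

lemma PD: "p < 6 \<Longrightarrow> x < 24 \<Longrightarrow> y < 24 \<Longrightarrow>
    P24 p p x y = (if p = 5 then 23 else 1) * (if x = y then 1 else 0)"
proof -
  assume p: "p < 6" and x: "x < 24" and y: "y < 24"
  consider "p \<le> 1" | "p \<in> {2,3,4}" | "p = 5" using c6[OF p] by blast
  then show ?thesis
  proof cases
    case 1 then show ?thesis using P_left[OF 1 x] unfolding T24_def by auto
  next
    case 2
    have q4: "\<not> p \<le> 1" "p \<le> 4" using 2 by auto
    have f: "sig p x < 24" "sig p (sig p x) = x" using Qf[OF 2 x] by auto
    have "sg p (sig p x) * sg p (sig p x) = 1" using Qf[OF 2 f(1)] by simp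
    then show ?thesis using P_Q[OF 2 x] f q4 unfolding T24_def by auto
  next
    case 3 then show ?thesis unfolding P24_def T24_def using WW[OF x y] by simp
  qed
qed

lemma POff: "p < q \<Longrightarrow> q < 6 \<Longrightarrow> x < 24 \<Longrightarrow> y < 24 \<Longrightarrow>
    P24 p q y x = eps p q * P24 p q x y"
proof -
  assume pq: "p < q" and q: "q < 6" and x: "x < 24" and y: "y < 24"
  consider "p \<le> 1" "q \<le> 1" | "p \<le> 1" "q \<in> {2,3,4}" | "p \<le> 1" "q = 5"
    | "p \<in> {2,3,4}" "q \<in> {2,3,4}" | "p \<in> {2,3,4}" "q = 5"
    using c66[OF pq q] by blast
  then show ?thesis
  proof cases
    case 1 then show ?thesis using P_left[OF 1(1) x] P_left[OF 1(1) y] unfolding eps_def T24_def by auto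
  next
    case 2
    then show ?thesis using P_left[OF 2(1) x] P_left[OF 2(1) y] Qskew[OF 2(2) x y] unfolding eps_def by auto
  next
    case 3
    then show ?thesis using P_left[OF 3(1) x] P_left[OF 3(1) y] Wsk[OF x y] unfolding eps_def T24_def by auto
  next
    case 4
    have "(p,q) \<in> {(2,3),(2,4),(3,4)}" using 4 pq by auto
    note h = QQ[OF this x y]
    have e: "eps p q = -1" using 4 unfolding eps_def by auto
    have "P24 p q z w = PQQ p q z w" if "z < 24" for z w
      using P_Q[OF 4(1) that] 4(2) unfolding PQQ_def T24_def by auto
    then show ?thesis using h e x y by simp
  next
    case 5
    have e: "eps p q = 1" using 5 unfolding eps_def by auto
    have "P24 p q z w = sg p (sig p z) * W24 w (sig p z)" if "z < 24" for z w
      using P_Q[OF 5(1) that] 5(2) unfolding T24_def by auto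
    then show ?thesis using QW[OF 5(1) x y] e x y by simp
  qed
qed

lemma sum48: "(\<Sum>l<48::nat. f l) = (\<Sum>l<24. f l) + (\<Sum>l<24. f (l + 24))"
proof -
  have "{..<48::nat} = {0..<24} \<union> {24..<48}" by auto
  then have "(\<Sum>l<48::nat. f l) = (\<Sum>l\<in>{0..<24}. f l) + (\<Sum>l\<in>{24..<48}. f l)"
    by (simp add: sum.union_disjoint)
  also have "(\<Sum>l\<in>{24..<48}. f l) = (\<Sum>l\<in>{0..<24}. f (l + 24))"
    using sum.shift_bounds_nat_ivl[of f 0 24 24] by simp
  finally show ?thesis by (simp add: atLeast0LessThan)
qed

lemma tens: "G p q i j = A2 p q (i div 24) (j div 24) * P24 p q (i mod 24) (j mod 24)"
proof -
  have "G p q i j = (\<Sum>l<24. B p i l * B q j l) + (\<Sum>l<24. B p i (l+24) * B q j (l+24))"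
    unfolding G_def by (rule sum48)
  also have "(\<Sum>l<24. B p i l * B q j l) = (\<Sum>l<24. (a2 p (i div 24) 0 * a2 q (j div 24) 0) * (T24 p (i mod 24) l * T24 q (j mod 24) l))"
    unfolding B_def by (intro sum.cong) auto
  also have "(\<Sum>l<24. B p i (l+24) * B q j (l+24)) = (\<Sum>l<24. (a2 p (i div 24) 1 * a2 q (j div 24) 1) * (T24 p (i mod 24) l * T24 q (j mod 24) l))"
    unfolding B_def by (intro sum.cong) auto
  finally show ?thesis unfolding A2_def P24_def
    by (simp add: sum_distrib_left[symmetric] distrib_right)
qed

lemma Gskew0: "p < q \<Longrightarrow> q < 6 \<Longrightarrow> i < 48 \<Longrightarrow> j < 48 \<Longrightarrow> G q p i j = - G p q i j"
proof -
  assume pq: "p < q" and q: "q < 6" and i: "i < 48" and j: "j < 48"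
  have bi: "i div 24 < 2" "j div 24 < 2" using i j by auto
  have xi: "i mod 24 < 24" "j mod 24 < 24" by auto
  have a: "A2 q p (i div 24) (j div 24) = A2 p q (j div 24) (i div 24)"
    unfolding A2_def by (simp add: mult.commute)
  have pp: "P24 q p (i mod 24) (j mod 24) = P24 p q (j mod 24) (i mod 24)"
    unfolding P24_def by (simp add: mult.commute)
  have a2: "A2 p q (j div 24) (i div 24) = - eps p q * A2 p q (i div 24) (j div 24)"
    using AA[of p q "i div 24" "j div 24"] pq q bi by auto
  have p2: "P24 p q (j mod 24) (i mod 24) = eps p q * P24 p q (i mod 24) (j mod 24)"
    using POff[OF pq q xi] .
  have e: "eps p q * eps p q = 1" unfolding eps_def by auto
  have "G q p i j = (- eps p q * A2 p q (i div 24) (j div 24)) * (eps p q * P24 p q (i mod 24) (j mod 24))"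
    unfolding tens a pp a2 p2 ..
  also have "\<dots> = - (eps p q * eps p q) * (A2 p q (i div 24) (j div 24) * P24 p q (i mod 24) (j mod 24))"
    by (simp add: algebra_simps)
  finally show ?thesis unfolding e tens by simp
qed

lemma Gskew: "p < 6 \<Longrightarrow> q < 6 \<Longrightarrow> p \<noteq> q \<Longrightarrow> i < 48 \<Longrightarrow> j < 48 \<Longrightarrow> G q p i j = - G p q i j"
proof -
  assume "p < 6" "q < 6" "p \<noteq> q" "i < 48" "j < 48"
  then consider "p < q" | "q < p" by linarith
  then show ?thesis
  proof cases
    case 1 then show ?thesis using Gskew0 \<open>q < 6\<close> \<open>i < 48\<close> \<open>j < 48\<close> by blast
  next
    case 2 then have "G p q i j = - G q p i j" using Gskew0 \<open>p < 6\<close> \<open>i < 48\<close> \<open>j < 48\<close> by blast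
    then show ?thesis by simp
  qed
qed

lemma GD: "p < 6 \<Longrightarrow> i < 48 \<Longrightarrow> j < 48 \<Longrightarrow> G p p i j = (if p = 5 then 23 else 1) * (if i = j then 1 else 0)"
proof -
  assume p: "p < 6" and i: "i < 48" and j: "j < 48"
  have bi: "i div 24 < 2" "j div 24 < 2" using i j by auto
  have a: "A2 p p (i div 24) (j div 24) = (if i div 24 = j div 24 then 1 else 0)"
    using AA[of p p "i div 24" "j div 24"] p bi by auto
  have pp: "P24 p p (i mod 24) (j mod 24) = (if p = 5 then 23 else 1) * (if i mod 24 = j mod 24 then 1 else 0)"
    using PD[OF p] by simp
  have "(i div 24 = j div 24 \<and> i mod 24 = j mod 24) \<longleftrightarrow> i = j"
    by (metis div_mult_mod_eq)
  then show ?thesis unfolding tens a pp by auto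
qed

lemma asum:
  fixes F :: "nat \<Rightarrow> nat \<Rightarrow> int"
  assumes fin: "finite S" and sk: "\<And>p q. p \<in> S \<Longrightarrow> q \<in> S \<Longrightarrow> p \<noteq> q \<Longrightarrow> F q p = - F p q"
  shows "(\<Sum>p\<in>S. \<Sum>q\<in>S. F p q) = (\<Sum>p\<in>S. F p p)"
proof -
  have sw: "(\<Sum>p\<in>S. \<Sum>q\<in>S. F p q) = (\<Sum>p\<in>S. \<Sum>q\<in>S. F q p)" by (rule sum.swap)
  have "(\<Sum>p\<in>S. \<Sum>q\<in>S. F p q + F q p) = (\<Sum>p\<in>S. \<Sum>q\<in>S. F p q) + (\<Sum>p\<in>S. \<Sum>q\<in>S. F q p)"
    by (simp add: sum.distrib)
  then have "2 * (\<Sum>p\<in>S. \<Sum>q\<in>S. F p q) = (\<Sum>p\<in>S. \<Sum>q\<in>S. F p q + F q p)"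
    unfolding sw[symmetric] by simp
  also have "\<dots> = (\<Sum>p\<in>S. \<Sum>q\<in>S. if q = p then 2 * F p p else 0)"
  proof (intro sum.cong refl)
    fix p q assume "p \<in> S" "q \<in> S"
    then show "F p q + F q p = (if q = p then 2 * F p p else 0)" using sk[of p q] by auto
  qed
  also have "\<dots> = (\<Sum>p\<in>S. 2 * F p p)" using fin by (simp add: sum.delta')
  finally show ?thesis by (simp add: sum_distrib_left[symmetric])
qed

definition Nm :: "(nat \<Rightarrow> int) \<Rightarrow> nat \<Rightarrow> nat \<Rightarrow> int" where
  "Nm w i j = (\<Sum>p<6. w p * B p i j)"

lemma Gsum: "(\<Sum>l<48. w p * w q * (B p i l * B q j l)) = w p * w q * G p q i j"
  unfolding G_def by (simp add: sum_distrib_left)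

lemma Ninner:
  assumes i: "i < 48" and j: "j < 48"
  shows "(\<Sum>l<48. Nm w i l * Nm w j l) = (\<Sum>p<6. (w p)^2 * (if p = 5 then 23 else 1)) * (if i = j then 1 else 0)"
proof -
  have eq: "Nm w i l * Nm w j l = (\<Sum>p<6. \<Sum>q<6. w p * w q * (B p i l * B q j l))" for l
    unfolding Nm_def sum_product by (simp add: mult_ac)
  have "(\<Sum>l<48. Nm w i l * Nm w j l) = (\<Sum>l<48. \<Sum>p<6. \<Sum>q<6. w p * w q * (B p i l * B q j l))"
    using eq by simp
  also have "\<dots> = (\<Sum>p<6. \<Sum>l<48. \<Sum>q<6. w p * w q * (B p i l * B q j l))"
    by (rule sum.swap[of "\<lambda>l p. \<Sum>q<6. w p * w q * (B p i l * B q j l)" "{..<6}" "{..<48}"])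
  also have "\<dots> = (\<Sum>p<6. \<Sum>q<6. \<Sum>l<48. w p * w q * (B p i l * B q j l))"
  proof (rule sum.cong[OF refl])
    fix p show "(\<Sum>l<48. \<Sum>q<6. w p * w q * (B p i l * B q j l)) = (\<Sum>q<6. \<Sum>l<48. w p * w q * (B p i l * B q j l))"
      by (rule sum.swap[of "\<lambda>l q. w p * w q * (B p i l * B q j l)" "{..<6}" "{..<48}"])
  qed
  also have "\<dots> = (\<Sum>p<6. \<Sum>q<6. w p * w q * G p q i j)"
    by (rule sum.cong[OF refl], rule sum.cong[OF refl], rule Gsum)
  also have "\<dots> = (\<Sum>p<6. w p * w p * G p p i j)"
  proof (rule asum[of "{..<6}" "\<lambda>p q. w p * w q * G p q i j"])
    fix p q assume "p \<in> {..<6::nat}" "q \<in> {..<6::nat}" "p \<noteq> q"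
    then have "G q p i j = - G p q i j" by (intro Gskew i j) auto
    then show "w q * w p * G q p i j = - (w p * w q * G p q i j)" by (simp add: mult.commute)
  qed simp
  also have "\<dots> = (\<Sum>p<6. (w p)^2 * (if p = 5 then 23 else 1)) * (if i = j then 1 else 0)"
    unfolding sum_distrib_right by (intro sum.cong refl) (simp add: GD i j power2_eq_square)
  finally show ?thesis .
qed

lemma s6: "(\<Sum>p<(6::nat). f p) = f 0 + f 1 + f 2 + f 3 + f 4 + (f 5 :: int)"
  by (simp add: eval_nat_numeral)

definition arow :: "int \<Rightarrow> nat \<Rightarrow> nat \<Rightarrow> int" where
  "arow y r i = (if r < 24 then (if i = r then y else 0) else y * W24 (r - 24) i)"

lemma hi24: "\<not> (j::nat) < 24 \<Longrightarrow> j < 48 \<Longrightarrow> j div 24 = 1 \<and> j mod 24 = j - 24"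
proof -
  assume a: "\<not> j < 24" "j < 48"
  define t where "t = j - 24"
  have t: "j = t + 24" "t < 24" using a unfolding t_def by simp_all
  show ?thesis unfolding t(1) using t(2) by simp
qed

lemma B0: "r < 48 \<Longrightarrow> j < 48 \<Longrightarrow> B 0 r j = (if r = j then 1 else 0)"
proof -
  assume r: "r < 48" and j: "j < 48"
  have "(r div 24 = j div 24 \<and> r mod 24 = j mod 24) \<longleftrightarrow> r = j"
    by (metis div_mult_mod_eq)
  then show ?thesis unfolding B_def a2_def T24_def by auto
qed

lemma B5: "B 5 r j = (if r div 24 \<noteq> j div 24 then 1 else 0) * W24 (r mod 24) (j mod 24)"
  unfolding B_def a2_def T24_def by simp

lemma codekey:
  assumes r: "r < 48" and j: "j < 48"
  shows "3 dvd (y * (B 0 r j + B 5 r j) - (\<Sum>i<24. arow y r i * genIW i j))"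
proof (cases "r < 24")
  case True
  have S: "(\<Sum>i<24. arow y r i * genIW i j) = y * genIW r j"
  proof -
    have "(\<Sum>i<24. arow y r i * genIW i j) = (\<Sum>i<24. if i = r then y * genIW r j else 0)"
      unfolding arow_def using True by (intro sum.cong) auto
    also have "\<dots> = y * genIW r j" using True by (simp add: sum.delta)
    finally show ?thesis .
  qed
  have "B 0 r j + B 5 r j = genIW r j"
  proof (cases "j < 24")
    case True
    then show ?thesis using \<open>r < 24\<close> r j unfolding B0[OF r j] B5 genIW_def by simp
  next
    case False
    then have "j div 24 = 1" "j mod 24 = j - 24" using j hi24 by auto
    then show ?thesis using \<open>r < 24\<close> False r j unfolding B0[OF r j] B5 genIW_def by simp
  qed
  then show ?thesis using S by simp
next
  case False
  define x where "x = r - 24"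
  have x: "x < 24" "r div 24 = 1" "r mod 24 = x" using r False hi24[of r] unfolding x_def by auto
  have S: "(\<Sum>i<24. arow y r i * genIW i j) = y * (\<Sum>i<24. W24 x i * genIW i j)"
    unfolding arow_def x_def[symmetric] using False by (simp add: sum_distrib_left mult.assoc)
  show ?thesis
  proof (cases "j < 24")
    case True
    have "(\<Sum>i<24. W24 x i * genIW i j) = (\<Sum>i<24. if i = j then W24 x j else 0)"
      unfolding genIW_def using True by (intro sum.cong) auto
    also have "\<dots> = W24 x j" using True by (simp add: sum.delta)
    finally have "(\<Sum>i<24. arow y r i * genIW i j) = y * W24 x j" using S by simp
    moreover have "B 0 r j = 0" using B0[OF r j] True False by simp
    moreover have "B 5 r j = W24 x j" unfolding B5 using x True by simp
    ultimately show ?thesis by simp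
  next
    case jF: False
    define z where "z = j - 24"
    have z: "z < 24" "j div 24 = 1" "j mod 24 = z" using j jF hi24[of j] unfolding z_def by auto
    have "(\<Sum>i<24. W24 x i * genIW i j) = (\<Sum>i<24. W24 x i * W24 i z)"
      unfolding genIW_def z_def using jF by (intro sum.cong) auto
    also have "\<dots> = - (\<Sum>i<24. W24 x i * W24 z i)"
      by (simp add: Wsk[OF _ z(1)] sum_negf[symmetric])
    also have "\<dots> = - (if x = z then 23 else 0)" using WW[OF x(1) z(1)] by simp
    finally have "(\<Sum>i<24. arow y r i * genIW i j) = - y * (if x = z then 23 else 0)" using S by simp
    moreover have "B 0 r j = (if x = z then 1 else 0)" using B0[OF r j] x z
      unfolding x_def z_def using False jF by auto
    moreover have "B 5 r j = 0" unfolding B5 using x z by simp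
    ultimately show ?thesis by auto
  qed
qed

lemma frame_exists:
  fixes k :: nat and w0 y c1 c2 c3 c4 :: int
  assumes kk: "3 * int k = w0^2 + 9*(c1^2+c2^2+c3^2+c4^2) + 23*y^2"
    and cong: "3 dvd (w0 - y)"
  shows "has_frame (constrA 3 48 (gen_code 3 48 24 genIW)) 48 (real k)"
proof -
  define w where "w p = (if p = 0 then w0 else if p = 1 then 3*c1 else if p = 2 then 3*c2
     else if p = 3 then 3*c3 else if p = 4 then 3*c4 else y)" for p :: nat
  have sw: "(\<Sum>p<6. (w p)^2 * (if p = 5 then 23 else 1)) = 3 * int k"
    unfolding s6 kk w_def by (simp add: power_mult_distrib)
  define f where "f r = (\<lambda>j. if j < 48 then real_of_int (Nm w r j) / sqrt 3 else 0)" for r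
  have inner: "inner_N 48 (f r) (f s) = (if r = s then real k else 0)" if "r < 48" "s < 48" for r s
  proof -
    have "inner_N 48 (f r) (f s) = (\<Sum>l<48. real_of_int (Nm w r l * Nm w s l)) / 3"
      unfolding inner_N_def f_def by (simp add: sum_divide_distrib)
    also have "\<dots> = real_of_int (\<Sum>l<48. Nm w r l * Nm w s l) / 3" by simp
    also have "\<dots> = real_of_int (3 * int k * (if r = s then 1 else 0)) / 3"
      unfolding Ninner[OF that] sw ..
    finally show ?thesis by simp
  qed
  have memb: "f r \<in> constrA 3 48 (gen_code 3 48 24 genIW)" if r: "r < 48" for r
  proof -
    define S where "S j = (\<Sum>i<24. arow y r i * genIW i j)" for j
    define c where "c j = (if j < 48 then S j mod 3 else 0)" for j
    define z where "z j = (Nm w r j - c j) div 3" for j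
    have cC: "c \<in> gen_code 3 48 24 genIW"
      unfolding gen_code_def c_def S_def by (intro CollectI exI[of _ "arow y r"]) auto
    have d: "3 dvd (Nm w r j - c j)" if j: "j < 48" for j
    proof -
      obtain e where e: "w0 - y = 3 * e" using cong by (auto simp: dvd_def)
      then have we: "w0 = y + 3 * e" by simp
      have e1: "Nm w r j - y * (B 0 r j + B 5 r j) = 3 * (e * B 0 r j + c1 * B 1 r j + c2 * B 2 r j + c3 * B 3 r j + c4 * B 4 r j)"
        unfolding Nm_def s6 w_def we by (simp add: algebra_simps)
      have e2: "3 dvd (y * (B 0 r j + B 5 r j) - S j)" unfolding S_def by (rule codekey[OF r j])
      have e3: "3 dvd (S j - c j)" unfolding c_def using j by (simp add: mod_eq_dvd_iff[symmetric] mod_mod_trivial) 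
      have "Nm w r j - c j = (Nm w r j - y * (B 0 r j + B 5 r j)) + (y * (B 0 r j + B 5 r j) - S j) + (S j - c j)"
        by simp
      then show ?thesis using e1 e2 e3 by (metis dvd_add dvd_triv_left)
    qed
    show ?thesis unfolding constrA_def
    proof (intro CollectI bexI[OF _ cC] exI[of _ z] allI)
      fix j
      show "f r j = (if j < 48 then (of_int (c j) + of_int 3 * of_int (z j)) / sqrt (of_int 3) else 0)"
      proof (cases "j < 48")
        case True
        have "Nm w r j = c j + 3 * z j" using d[OF True] unfolding z_def by simp
        then have "real_of_int (Nm w r j) = of_int (c j) + of_int 3 * of_int (z j)" by simp
        then show ?thesis unfolding f_def using True by simp
      qed (simp add: f_def)
    qed
  qed
  show ?thesis unfolding has_frame_def
    by (intro exI[of _ f] conjI allI impI memb inner)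
qed

lemma excl: "k = 2 ^ a * 5 ^ b * 7 ^ c * 23 ^ d \<Longrightarrow> \<exists>m1 m2 m3 m4 :: nat. k = 2 ^ m1 * 5 ^ m2 * 7 ^ m3 * 23 ^ m4"
  by blast

lemma sq4_nat: "\<exists>c1 c2 c3 c4 :: int. int m = c1^2 + c2^2 + c3^2 + c4^2"
  using four_squares[of m] unfolding sq4_def by blast

theorem lemma5p1:
  fixes k :: nat
  assumes "k \<ge> 3"
    and "\<not> (\<exists>m1 m2 m3 m4 :: nat. k = 2 ^ m1 * 5 ^ m2 * 7 ^ m3 * 23 ^ m4)"
  shows "has_frame (constrA 3 48 (gen_code 3 48 24 genIW)) 48 (real k)"
proof -
  have n4: "k \<noteq> 4"
  proof
    assume "k = 4" then have "k = 2 ^ 2 * 5 ^ 0 * 7 ^ 0 * 23 ^ (0::nat)" by simp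
    then show False using assms(2) excl by blast
  qed
  have n5: "k \<noteq> 5"
  proof
    assume "k = 5" then have "k = 2 ^ 0 * 5 ^ 1 * 7 ^ 0 * 23 ^ (0::nat)" by simp
    then show False using assms(2) excl by blast
  qed
  have n7: "k \<noteq> 7"
  proof
    assume "k = 7" then have "k = 2 ^ 0 * 5 ^ 0 * 7 ^ 1 * 23 ^ (0::nat)" by simp
    then show False using assms(2) excl by blast
  qed
  have n10: "k \<noteq> 10"
  proof
    assume "k = 10" then have "k = 2 ^ 1 * 5 ^ 1 * 7 ^ 0 * 23 ^ (0::nat)" by simp
    then show False using assms(2) excl by blast
  qed
  consider (a) "k mod 3 = 0" | (b) "k mod 3 = 2" | (c) "k mod 3 = 1" by linarith
  then show ?thesis
  proof cases
    case a
    define m where "m = k div 3"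
    have km: "k = 3 * m" using a unfolding m_def by presburger
    obtain c1 c2 c3 c4 where c: "int m = c1^2 + c2^2 + c3^2 + c4^2" using sq4_nat by blast
    show ?thesis
    proof (rule frame_exists[of k 0 c1 c2 c3 c4 0])
      show "3 * int k = 0^2 + 9*(c1^2+c2^2+c3^2+c4^2) + 23*0^2" using km c by simp
    qed simp
  next
    case b
    have "k \<ge> 8" using b assms(1) n5 by presburger
    define m where "m = (k - 8) div 3"
    have km: "k = 8 + 3 * m" using b \<open>k \<ge> 8\<close> unfolding m_def by presburger
    obtain c1 c2 c3 c4 where c: "int m = c1^2 + c2^2 + c3^2 + c4^2" using sq4_nat by blast
    show ?thesis
    proof (rule frame_exists[of k 1 c1 c2 c3 c4 1])
      show "3 * int k = 1^2 + 9*(c1^2+c2^2+c3^2+c4^2) + 23*1^2" using km c by simp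
    qed simp
  next
    case c
    have "k \<ge> 13" using c assms(1) n4 n7 n10 by presburger
    define m where "m = (k - 13) div 3"
    have km: "k = 13 + 3 * m" using c \<open>k \<ge> 13\<close> unfolding m_def by presburger
    obtain c1 c2 c3 c4 where cc: "int m = c1^2 + c2^2 + c3^2 + c4^2" using sq4_nat by blast
    show ?thesis
    proof (rule frame_exists[of k 4 c1 c2 c3 c4 1])
      show "3 * int k = 4^2 + 9*(c1^2+c2^2+c3^2+c4^2) + 23*1^2" using km cc by simp
    qed simp
  qed
qed

end
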